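(* Let $\alpha\in(0,1]$, $V\subseteq\{1,\dots,m\}$, and let $\tau=(\tau_k)_{1\le k\le m}$ be a threshold family with values in $\mathcal A$ satisfying (C1) at level $\alpha$ w.r.t. $V$. Let $U\subseteq V$ be nonempty and $\lambda\in\{\tau_{|U|},\tau_{|V|}\}$. Define $\tilde\tau$ by $\tilde\tau_k=\sup\{t\in\mathcal A:\ t\le\lambda,\ \sum_{\ell=1}^{|U|-k+1}(\mathbf H(\lambda,t))_{[\ell:U]}\le k\alpha\}$ for $1\le k\le|U|-1$, $\tilde\tau_{|U|}=\lambda$, and $\tilde\tau_k=\sup\mathcal A$ for $k>|U|$. Then $\tau_k\le\tilde\tau_k$ for all $k\in\{1,\dots,m\}$. In particular, $\tau$ satisfies (C1) at level $\alpha$ w.r.t. every $U\subseteq V$.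
   Context: $F_1,\dots,F_m$ are nondecreasing functions. Support: $\mathcal A_i=\{x\in\mathbb R:\forall\varepsilon>0,\ F_i(x+\varepsilon)-F_i(x-\varepsilon)>0\}$ and $\mathcal A=\{0\}\cup\bigcup_i\mathcal A_i$ (when $\mathcal A$ is finite the suprema above are maxima). A threshold family is a nondecreasing sequence $(\tau_k)_{1\le k\le m}$ of nonnegative reals. For $F_i(s)<1$, $\mathbf H_i(s,t)=F_i(t)/(1-F_i(s))$; $(\mathbf H(s,t))_{[\ell:U]}$ is the $\ell$-th largest of $(\mathbf H_i(s,t))_{i\in U}$. Condition (C1) at level $\alpha$ w.r.t. $U$: $F_i(\tau_{|U|})<1$ for all $i\in U$ and $\max_{1\le k\le|U|}\max_{A\subseteq U,|A|=|U|-k+1}\frac1k\sum_{i\in A}\mathbf H_i(\tau_{|U|},\tau_k)\le\alpha$. *)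

theory Defs
  imports "HOL-Analysis.Analysis"
begin

definition supp_F :: "(nat \<Rightarrow> real \<Rightarrow> real) \<Rightarrow> nat \<Rightarrow> real set" where
  "supp_F F i = {x. \<forall>\<epsilon>>0. F i (x + \<epsilon>) - F i (x - \<epsilon>) > 0}"

definition Aset :: "nat \<Rightarrow> (nat \<Rightarrow> real \<Rightarrow> real) \<Rightarrow> real set" where
  "Aset m F = {0} \<union> (\<Union>i\<in>{1..m}. supp_F F i)"

definition HH :: "(nat \<Rightarrow> real \<Rightarrow> real) \<Rightarrow> nat \<Rightarrow> real \<Rightarrow> real \<Rightarrow> real" where
  "HH F i s t = F i t / (1 - F i s)"

text \<open>The l-th largest (l >= 1) of the values f i, i in U (finite U), counted with multiplicity.\<close>
definition kth_largest :: "(nat \<Rightarrow> real) \<Rightarrow> nat set \<Rightarrow> nat \<Rightarrow> real" where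
  "kth_largest f U l = rev (sort (map f (sorted_list_of_set U))) ! (l - 1)"

definition threshold_family :: "nat \<Rightarrow> (nat \<Rightarrow> real) \<Rightarrow> bool" where
  "threshold_family m \<tau> \<longleftrightarrow> (\<forall>k\<in>{1..m}. 0 \<le> \<tau> k) \<and>
     (\<forall>k\<in>{1..m}. \<forall>k'\<in>{1..m}. k \<le> k' \<longrightarrow> \<tau> k \<le> \<tau> k')"

definition C1 :: "(nat \<Rightarrow> real \<Rightarrow> real) \<Rightarrow> (nat \<Rightarrow> real) \<Rightarrow> real \<Rightarrow> nat set \<Rightarrow> bool" where
  "C1 F \<tau> \<alpha> U \<longleftrightarrow> (\<forall>i\<in>U. F i (\<tau> (card U)) < 1) \<and>
     (\<forall>k\<in>{1..card U}. \<forall>A. A \<subseteq> U \<and> card A = card U - k + 1 \<longrightarrow>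
        (1 / real k) * (\<Sum>i\<in>A. HH F i (\<tau> (card U)) (\<tau> k)) \<le> \<alpha>)"

text \<open>The family tilde-tau (extended-real valued, so that suprema of unbounded/empty sets make sense).\<close>
definition tilde_tau :: "nat \<Rightarrow> (nat \<Rightarrow> real \<Rightarrow> real) \<Rightarrow> real \<Rightarrow> nat set \<Rightarrow> real \<Rightarrow> nat \<Rightarrow> ereal" where
  "tilde_tau m F \<alpha> U lam k =
     (if 1 \<le> k \<and> k \<le> card U - 1 then
        Sup (ereal ` {t \<in> Aset m F. t \<le> lam \<and>
               (\<Sum>l=1..card U - k + 1. kth_largest (\<lambda>i. HH F i lam t) U l) \<le> real k * \<alpha>})
      else if k = card U then ereal lam
      else Sup (ereal ` Aset m F))"

end

theory Submission
  imports Defs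
begin

lemma insort_map: "insort (f x) (map f ys) = map f (insort_key f x ys)"
  by (induction ys) auto
lemma sort_map': "sort (map f xs) = map f (sort_key f xs)"
  by (induction xs) (auto simp: insort_map)
lemma sum_take: "(\<Sum>l=1..j. xs ! (l - 1)) = sum_list (take j (xs::real list))" if "j \<le> length xs"
proof -
  have "(\<Sum>l=1..j. xs ! (l - 1)) = (\<Sum>i=0..<j. xs ! i)"
    by (rule sum.reindex_bij_witness[of _ "\<lambda>i. i+1" "\<lambda>l. l - 1"]) auto
  also have "\<dots> = sum_list (take j xs)"
    using that by (simp add: sum_list_sum_nth min_def)
  finally show ?thesis .
qed
lemma kth_sum:
  assumes "finite U" "j \<le> card U"
  shows "\<exists>B. B \<subseteq> U \<and> card B = j \<and> (\<Sum>l=1..j. kth_largest f U l) = (\<Sum>i\<in>B. f i)"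
proof -
  define L where "L = rev (sort_key f (sorted_list_of_set U))"
  have d: "distinct L" and s: "set L = U" and len: "length L = card U"
    using assms by (auto simp: L_def length_sorted_list_of_set)
  have xs: "rev (sort (map f (sorted_list_of_set U))) = map f L"
    by (simp add: L_def sort_map' rev_map)
  have "(\<Sum>l=1..j. kth_largest f U l) = sum_list (take j (map f L))"
    unfolding kth_largest_def xs using assms len by (intro sum_take) simp
  also have "\<dots> = (\<Sum>i\<in>set (take j L). f i)"
    using d by (simp add: take_map sum_list_distinct_conv_sum_set)
  finally show ?thesis using d s len assms
    by (intro exI[of _ "set (take j L)"]) (auto simp: distinct_card set_take_subset dest: in_set_takeD)
qed
theorem mainTheorem16:
  fixes m :: nat and F :: "nat \<Rightarrow> real \<Rightarrow> real" and \<tau> :: "nat \<Rightarrow> real"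
    and \<alpha> lam :: real and U V :: "nat set"
  assumes F_mono: "\<And>i. i \<in> {1..m} \<Longrightarrow> mono (F i)"
    and F_range: "\<And>i x. i \<in> {1..m} \<Longrightarrow> 0 \<le> F i x \<and> F i x \<le> 1"
    and alpha: "0 < \<alpha>" "\<alpha> \<le> 1"
    and V: "V \<subseteq> {1..m}"
    and thr: "threshold_family m \<tau>"
    and valsA: "\<And>k. k \<in> {1..m} \<Longrightarrow> \<tau> k \<in> Aset m F"
    and C1V: "C1 F \<tau> \<alpha> V"
    and U: "U \<subseteq> V" "U \<noteq> {}"
    and lam: "lam \<in> {\<tau> (card U), \<tau> (card V)}"
  shows "(\<forall>k\<in>{1..m}. ereal (\<tau> k) \<le> tilde_tau m F \<alpha> U lam k) \<and>
         (\<forall>U'. U' \<subseteq> V \<longrightarrow> C1 F \<tau> \<alpha> U')"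
proof -
  have finV: "finite V" using V finite_subset by blast
  define N where "N = card V"
  have NM: "N \<le> m" unfolding N_def using card_mono[OF _ V] by simp
  have nN: "card U \<le> N" unfolding N_def using card_mono[OF finV U(1)] .
  have finU: "finite U" using finV U(1) finite_subset by blast
  have n1: "1 \<le> card U" using finU U(2) by (simp add: Suc_le_eq card_gt_0_iff)
  have tmono: "\<And>k k'. 1 \<le> k \<Longrightarrow> k \<le> k' \<Longrightarrow> k' \<le> m \<Longrightarrow> \<tau> k \<le> \<tau> k'"
    using thr unfolding threshold_family_def by auto
  have Fm: "\<And>i. i \<in> V \<Longrightarrow> mono (F i)" using F_mono V by auto
  have Fr: "\<And>i x. i \<in> V \<Longrightarrow> 0 \<le> F i x \<and> F i x \<le> 1" using F_range V by auto
  have FN: "\<And>i. i \<in> V \<Longrightarrow> F i (\<tau> N) < 1" using C1V unfolding C1_def N_def by auto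
  have key: "(\<Sum>i\<in>B. HH F i s (\<tau> k)) \<le> real k * \<alpha>"
    if B: "B \<subseteq> V" "card B \<le> N - k + 1" and k: "1 \<le> k" "k \<le> N"
      and s: "\<And>i. i \<in> V \<Longrightarrow> F i s \<le> F i (\<tau> N)" for B s k
  proof -
    obtain A where A: "B \<subseteq> A" "A \<subseteq> V" "card A = N - k + 1"
    proof -
      have "N - k + 1 \<le> card V" using k unfolding N_def by auto
      thus ?thesis using exists_subset_between[OF B(2) _ B(1) finV] that by blast
    qed
    have finA: "finite A" using A finV finite_subset by blast
    have "(\<Sum>i\<in>B. HH F i s (\<tau> k)) \<le> (\<Sum>i\<in>B. HH F i (\<tau> N) (\<tau> k))"
    proof (rule sum_mono)
      fix i assume "i \<in> B"
      hence iV: "i \<in> V" using B by auto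
      show "HH F i s (\<tau> k) \<le> HH F i (\<tau> N) (\<tau> k)"
        unfolding HH_def
        apply (rule divide_left_mono)
        using Fr[OF iV] FN[OF iV] s[OF iV] by auto
    qed
    also have "\<dots> \<le> (\<Sum>i\<in>A. HH F i (\<tau> N) (\<tau> k))"
      apply (rule sum_mono2[OF finA A(1)])
      unfolding HH_def using Fr FN A(2) by (auto intro!: divide_nonneg_pos)
    also have "\<dots> \<le> real k * \<alpha>"
    proof -
      have "(1 / real k) * (\<Sum>i\<in>A. HH F i (\<tau> N) (\<tau> k)) \<le> \<alpha>"
        using C1V A k unfolding C1_def N_def by auto
      thus ?thesis using k by (simp add: field_simps)
    qed
    finally show ?thesis .
  qed
  have part1: "\<forall>k\<in>{1..m}. ereal (\<tau> k) \<le> tilde_tau m F \<alpha> U lam k"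
  proof
    fix k assume k: "k \<in> {1..m}"
    have lamle: "lam \<le> \<tau> N" "\<tau> (card U) \<le> lam"
      using lam tmono[OF n1 nN NM] unfolding N_def by auto
    show "ereal (\<tau> k) \<le> tilde_tau m F \<alpha> U lam k"
    proof (cases "1 \<le> k \<and> k \<le> card U - 1")
      case True
      have tin: "\<tau> k \<in> {t \<in> Aset m F. t \<le> lam \<and>
               (\<Sum>l=1..card U - k + 1. kth_largest (\<lambda>i. HH F i lam t) U l) \<le> real k * \<alpha>}"
      proof -
        have "\<tau> k \<le> lam" using tmono[of k "card U"] True nN NM lamle by fastforce
        moreover
        obtain B where B: "B \<subseteq> U" "card B = card U - k + 1"
          "(\<Sum>l=1..card U - k + 1. kth_largest (\<lambda>i. HH F i lam (\<tau> k)) U l) = (\<Sum>i\<in>B. HH F i lam (\<tau> k))"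
        proof -
          have "card U - k + 1 \<le> card U" using True by auto
          from kth_sum[OF finU this, of "\<lambda>i. HH F i lam (\<tau> k)"] that show ?thesis by blast
        qed
        have "(\<Sum>i\<in>B. HH F i lam (\<tau> k)) \<le> real k * \<alpha>"
        proof (rule key)
          show "B \<subseteq> V" using B U by auto
          show "card B \<le> N - k + 1" using B nN True by auto
          show "1 \<le> k" "k \<le> N" using True nN by auto
          fix i assume "i \<in> V"
          thus "F i lam \<le> F i (\<tau> N)" using Fm lamle by (auto dest: monoD)
        qed
        ultimately show ?thesis using valsA k B by auto
      qed
      have "ereal (\<tau> k) \<le> Sup (ereal ` {t \<in> Aset m F. t \<le> lam \<and>
               (\<Sum>l=1..card U - k + 1. kth_largest (\<lambda>i. HH F i lam t) U l) \<le> real k * \<alpha>})"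
        by (rule Sup_upper) (use tin in blast)
      thus ?thesis using True unfolding tilde_tau_def by simp
    next
      case False
      show ?thesis
      proof (cases "k = card U")
        case True
        thus ?thesis using False lamle n1 unfolding tilde_tau_def by auto
      next
        case F2: False
        have "ereal (\<tau> k) \<le> Sup (ereal ` Aset m F)"
          by (rule Sup_upper) (use valsA k in blast)
        thus ?thesis using False F2 unfolding tilde_tau_def by auto
      qed
    qed
  qed
  have part2: "\<forall>U'. U' \<subseteq> V \<longrightarrow> C1 F \<tau> \<alpha> U'"
  proof (intro allI impI)
    fix U' assume U': "U' \<subseteq> V"
    have n'N: "card U' \<le> N" unfolding N_def using card_mono[OF finV U'] .
    show "C1 F \<tau> \<alpha> U'"
    proof (cases "U' = {}")
      case True thus ?thesis unfolding C1_def by simp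
    next
      case False
      have finU': "finite U'" using finV U' finite_subset by blast
      have n1': "1 \<le> card U'" using finU' False by (simp add: Suc_le_eq card_gt_0_iff)
      have Fle: "\<And>i. i \<in> V \<Longrightarrow> F i (\<tau> (card U')) \<le> F i (\<tau> N)"
        using Fm tmono[OF n1' n'N NM] by (auto dest: monoD)
      show ?thesis unfolding C1_def
      proof (intro conjI ballI allI impI)
        fix i assume "i \<in> U'"
        thus "F i (\<tau> (card U')) < 1" using Fle FN U' by force
      next
        fix k A assume k: "k \<in> {1..card U'}" and A: "A \<subseteq> U' \<and> card A = card U' - k + 1"
        have "(\<Sum>i\<in>A. HH F i (\<tau> (card U')) (\<tau> k)) \<le> real k * \<alpha>"
          using key[of A k "\<tau> (card U')"] A U' k n'N Fle by auto
        thus "1 / real k * (\<Sum>i\<in>A. HH F i (\<tau> (card U')) (\<tau> k)) \<le> \<alpha>"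
          using k by (simp add: field_simps)
      qed
    qed
  qed
  show ?thesis using part1 part2 by blast
qed

end
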